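(* Let $\mathcal X$ be a set, $B>0$, $T\ge 1$, and $\gamma\in(B/T,B)$. Let $\mathcal F$ be a set of functions $\mathcal X\to\mathbb R$ with $\sup_{f\in\mathcal F}\|f\|_\infty\le B$ such that $(\mathcal F,\|\cdot\|_\infty)$ is totally bounded. Let $(x_t)_{t\ge1}$ be any sequence in $\mathcal X$ and $(y_t)_{t\ge 1}$ any real sequence with $\max_{1\le t\le T}|y_t|\le B$. Then the Chaining Exponentially Weighted Average forecaster (described in the context), tuned with $\eta^{(0)}=1/(50B^2)$ and $\eta^{(k)}=\sqrt{2\log(N_k)/T}\,2^k/(30B\gamma)$ for $k=1,\ldots,K$, satisfies $$\sum_{t=1}^T(y_t-\hat y_t)^2-\inf_{f\in\mathcal F}\sum_{t=1}^T(y_t-f(x_t))^2\le B^2\big(5+50\log\mathcal N_\infty(\mathcal F,\gamma)\big)+120B\sqrt T\int_0^{\gamma/2}\sqrt{\log\mathcal N_\infty(\mathcal F,\epsilon)}\,d\epsilon.$$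
   Context: Online protocol: at each round $t$, $x_t$ is revealed, the forecaster outputs $\hat y_t\in\mathbb R$, then $y_t$ is revealed. $\|f\|_\infty=\sup_{x\in\mathcal X}|f(x)|$. A proper $\epsilon$-net of $\mathcal F$ is a subset $\mathcal G\subseteq\mathcal F$ such that every $f\in\mathcal F$ has some $g\in\mathcal G$ with $\|f-g\|_\infty\le\epsilon$; $\mathcal N_\infty(\mathcal F,\epsilon)$ is the smallest cardinality of a proper $\epsilon$-net; totally bounded means this is finite for all $\epsilon>0$. Construction: set $K=\lceil\log_2(\gamma T/B)\rceil$. For each $k\ge 0$, let $\mathcal F^{(k)}$ be a proper $\gamma/2^k$-net of $\mathcal F$ of cardinality $\mathcal N_\infty(\mathcal F,\gamma/2^k)$, and for $f\in\mathcal F$ let $\pi_k(f)\in\arg\min_{h\in\mathcal F^{(k)}}\|f-h\|_\infty$. Write $\mathcal F^{(0)}=\{f^{(0)}_1,\ldots,f^{(0)}_{N_0}\}$ and, for $k\ge1$, $\mathcal G^{(k)}=\{\pi_k(f)-\pi_{k-1}(f):f\in\mathcal F\}=\{g^{(k)}_1,\ldots,g^{(k)}_{N_k}\}$. Algorithm: initialize $\hat{\boldsymbol w}_1$ uniform on $\{1,\ldots,N_0\}$ and $\hat{\boldsymbol u}^{(j,k)}_1$ uniform on $\{1,\ldots,N_k\}$ for all $j\le N_0$, $k\le K$. At round $t$: define $\hat f_{t,j}=f^{(0)}_j+\sum_{k=1}^K\sum_{i=1}^{N_k}\hat u^{(j,k)}_{t,i}g^{(k)}_i$; predict $\hat y_t=\sum_{j=1}^{N_0}\hat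 w_{t,j}\hat f_{t,j}(x_t)$; after observing $y_t$, update $$\hat u^{(j,k)}_{t+1,i}\propto\exp\Big(-\eta^{(k)}\sum_{s=1}^t-2\big(y_s-\hat f_{s,j}(x_s)\big)g^{(k)}_i(x_s)\Big),\qquad \hat w_{t+1,j}\propto\exp\Big(-\eta^{(0)}\sum_{s=1}^t\big(y_s-\hat f_{s,j}(x_s)\big)^2\Big),$$ normalized to sum to one over $i\in\{1,\ldots,N_k\}$ and over $j\in\{1,\ldots,N_0\}$ respectively. *)

theory Defs
  imports "HOL-Analysis.Analysis"
begin

text \<open>Sup norm of a real-valued function on a set (the type 'a plays the role of X).\<close>
definition sup_norm :: "('a \<Rightarrow> real) \<Rightarrow> real" where
  "sup_norm f = (SUP z. \<bar>f z\<bar>)"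

definition proper_net :: "('a \<Rightarrow> real) set \<Rightarrow> real \<Rightarrow> ('a \<Rightarrow> real) set \<Rightarrow> bool" where
  "proper_net F \<epsilon> G \<longleftrightarrow> G \<subseteq> F \<and> (\<forall>f\<in>F. \<exists>g\<in>G. sup_norm (\<lambda>z. f z - g z) \<le> \<epsilon>)"

definition covering_number :: "('a \<Rightarrow> real) set \<Rightarrow> real \<Rightarrow> nat" where
  "covering_number F \<epsilon> = (LEAST n. \<exists>G. finite G \<and> card G = n \<and> proper_net F \<epsilon> G)"

definition totally_bounded_sup :: "('a \<Rightarrow> real) set \<Rightarrow> bool" where
  "totally_bounded_sup F \<longleftrightarrow> (\<forall>\<epsilon>>0. \<exists>G. finite G \<and> proper_net F \<epsilon> G)"

definition ewa_weight :: "real \<Rightarrow> (nat \<Rightarrow> real) \<Rightarrow> nat \<Rightarrow> nat \<Rightarrow> real" where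
  "ewa_weight \<eta> L n i = exp (- \<eta> * L i) / (\<Sum>i'<n. exp (- \<eta> * L i'))"

text \<open>hat f_{t,j}, given the cumulative exponents C j k i = sum_{s<t} -2 (y_s - hat f_{s,j}(x_s)) g^(k)_i(x_s).\<close>
definition chain_fhat ::
  "nat \<Rightarrow> (nat \<Rightarrow> nat) \<Rightarrow> (nat \<Rightarrow> real) \<Rightarrow> (nat \<Rightarrow> nat \<Rightarrow> 'a \<Rightarrow> real) \<Rightarrow> (nat \<Rightarrow> 'a \<Rightarrow> real)
   \<Rightarrow> (nat \<Rightarrow> nat \<Rightarrow> nat \<Rightarrow> real) \<Rightarrow> nat \<Rightarrow> 'a \<Rightarrow> real" where
  "chain_fhat K N \<eta> g f0 C j z =
     f0 j z + (\<Sum>k=1..K. \<Sum>i<N k. ewa_weight (\<eta> k) (C j k) (N k) i * g k i z)"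

primrec chain_cum ::
  "nat \<Rightarrow> (nat \<Rightarrow> nat) \<Rightarrow> (nat \<Rightarrow> real) \<Rightarrow> (nat \<Rightarrow> nat \<Rightarrow> 'a \<Rightarrow> real) \<Rightarrow> (nat \<Rightarrow> 'a \<Rightarrow> real)
   \<Rightarrow> (nat \<Rightarrow> 'a) \<Rightarrow> (nat \<Rightarrow> real) \<Rightarrow> nat \<Rightarrow> (nat \<Rightarrow> nat \<Rightarrow> nat \<Rightarrow> real)" where
  "chain_cum K N \<eta> g f0 x y 0 = (\<lambda>j k i. 0)"
| "chain_cum K N \<eta> g f0 x y (Suc n) = (\<lambda>j k i. chain_cum K N \<eta> g f0 x y n j k i
      + (- 2) * (y (Suc n) - chain_fhat K N \<eta> g f0 (chain_cum K N \<eta> g f0 x y n) j (x (Suc n)))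
          * g k i (x (Suc n)))"

primrec chain_loss ::
  "nat \<Rightarrow> (nat \<Rightarrow> nat) \<Rightarrow> (nat \<Rightarrow> real) \<Rightarrow> (nat \<Rightarrow> nat \<Rightarrow> 'a \<Rightarrow> real) \<Rightarrow> (nat \<Rightarrow> 'a \<Rightarrow> real)
   \<Rightarrow> (nat \<Rightarrow> 'a) \<Rightarrow> (nat \<Rightarrow> real) \<Rightarrow> nat \<Rightarrow> nat \<Rightarrow> real" where
  "chain_loss K N \<eta> g f0 x y 0 = (\<lambda>j. 0)"
| "chain_loss K N \<eta> g f0 x y (Suc n) = (\<lambda>j. chain_loss K N \<eta> g f0 x y n j
      + (y (Suc n) - chain_fhat K N \<eta> g f0 (chain_cum K N \<eta> g f0 x y n) j (x (Suc n)))\<^sup>2)"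

text \<open>Prediction hat y_t at round t >= 1.\<close>
definition chain_pred ::
  "real \<Rightarrow> nat \<Rightarrow> nat \<Rightarrow> (nat \<Rightarrow> nat) \<Rightarrow> (nat \<Rightarrow> real) \<Rightarrow> (nat \<Rightarrow> nat \<Rightarrow> 'a \<Rightarrow> real) \<Rightarrow> (nat \<Rightarrow> 'a \<Rightarrow> real)
   \<Rightarrow> (nat \<Rightarrow> 'a) \<Rightarrow> (nat \<Rightarrow> real) \<Rightarrow> nat \<Rightarrow> real" where
  "chain_pred \<eta>0 K N0 N \<eta> g f0 x y t =
     (\<Sum>j<N0. ewa_weight \<eta>0 (chain_loss K N \<eta> g f0 x y (t - 1)) N0 j
             * chain_fhat K N \<eta> g f0 (chain_cum K N \<eta> g f0 x y (t - 1)) j (x t))"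

end

theory Submission imports Defs "HOL-Probability.Hoeffding" begin

lemma ewa_weight_nonneg: "ewa_weight \<eta> L n i \<ge> 0"
  unfolding ewa_weight_def by (auto intro!: divide_nonneg_nonneg sum_nonneg)

lemma ewa_weight_sum: assumes "n > 0" shows "(\<Sum>i<n. ewa_weight \<eta> L n i) = 1"
proof -
  have "(\<Sum>i'<n. exp (- \<eta> * L i')) > 0" using assms by (intro sum_pos) auto
  then show ?thesis unfolding ewa_weight_def by (simp add: sum_divide_distrib[symmetric])
qed

lemma hoeff_fin:
  fixes u a :: "nat \<Rightarrow> real"
  assumes S: "finite S" and u0: "\<And>i. i \<in> S \<Longrightarrow> u i \<ge> 0" and u1: "(\<Sum>i\<in>S. u i) = 1"
    and ab: "\<And>i. i \<in> S \<Longrightarrow> \<bar>a i\<bar> \<le> L" and L: "L > 0" and s: "s > 0"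
  shows "(\<Sum>i\<in>S. u i * exp (s * a i)) \<le> exp (s * (\<Sum>i\<in>S. u i * a i) + s\<^sup>2 * L\<^sup>2 / 2)"
proof -
  define m where "m = (\<Sum>i\<in>S. u i * a i)"
  have chord: "exp (s * a i) \<le> (L - a i) / (2*L) * exp (- s * L) + (a i + L) / (2*L) * exp (s * L)"
    if "i \<in> S" for i
  proof -
    define w where "w = (L - a i) / (2*L)"
    have w: "0 \<le> w" "w \<le> 1" using ab[OF that] L by (auto simp: w_def field_simps)
    have "exp (s * ((1 - w) *\<^sub>R L + w *\<^sub>R (-L))) \<le> (1 - w) * exp (s * L) + w * exp (s * (-L))"
      using w s by (intro convex_onD[OF convex_on_exp]) auto
    also have "(1 - w) *\<^sub>R L + w *\<^sub>R (-L) = a i" using L by (simp add: w_def field_simps)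
    also have "1 - w = (a i + L) / (2*L)" using L by (simp add: w_def field_simps)
    finally show ?thesis by (simp add: w_def algebra_simps)
  qed
  have "(\<Sum>i\<in>S. u i * exp (s * a i)) \<le> (\<Sum>i\<in>S. u i * ((L - a i) / (2*L) * exp (- s * L) + (a i + L) / (2*L) * exp (s * L)))"
    by (intro sum_mono mult_left_mono chord u0)
  also have "\<dots> = (L - m) / (2*L) * exp (- s * L) + (m + L) / (2*L) * exp (s * L)"
  proof -
    have e: "u i * ((L - a i) / (2*L) * exp (- s * L) + (a i + L) / (2*L) * exp (s * L))
       = u i * ((exp (- s * L) + exp (s * L)) / 2) + (u i * a i) * ((exp (s * L) - exp (- s * L)) / (2*L))" for i
      using L by (simp add: field_simps)
    show ?thesis unfolding e sum.distrib sum_distrib_right[symmetric] u1 m_def[symmetric]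
      using L by (simp add: field_simps)
  qed
  finally have 1: "(\<Sum>i\<in>S. u i * exp (s * a i)) \<le> (L - m) / (2*L) * exp (- s * L) + (m + L) / (2*L) * exp (s * L)" .
  define p where "p = (m + L) / (2*L)"
  define h where "h = 2 * s * L"
  have mb: "\<bar>m\<bar> \<le> L"
  proof -
    have "\<bar>m\<bar> \<le> (\<Sum>i\<in>S. \<bar>u i * a i\<bar>)" unfolding m_def by (rule sum_abs)
    also have "\<dots> \<le> (\<Sum>i\<in>S. u i * L)" using u0 ab by (intro sum_mono) (auto simp: abs_mult intro: mult_left_mono)
    also have "\<dots> = L" using u1 by (simp add: sum_distrib_right[symmetric])
    finally show ?thesis .
  qed
  have p0: "p \<ge> 0" using mb L by (auto simp: p_def)
  have h0: "h \<ge> 0" using s L by (auto simp: h_def)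
  have pos: "1 + p * (exp h - 1) > 0"
  proof -
    have "exp h \<ge> 1" using h0 by simp
    then show ?thesis using p0 by (smt (verit) mult_nonneg_nonneg)
  qed
  have aux: "-h * p + ln (1 + p * (exp h - 1)) \<le> h\<^sup>2 / 8"
    using Hoeffdings_lemma_aux[OF h0 p0] by simp
  have "(L - m) / (2*L) * exp (- s * L) + (m + L) / (2*L) * exp (s * L)
        = exp (- s * L) * (1 + p * (exp h - 1))"
  proof -
    have e1: "exp (- s * L) = 1 / exp (s * L)" by (simp add: exp_minus field_simps)
    have e2: "exp h = exp (s * L) * exp (s * L)" by (simp add: h_def flip: exp_add)
    show ?thesis unfolding e1 e2 using L by (simp add: p_def field_simps)
  qed
  also have "1 + p * (exp h - 1) = exp (ln (1 + p * (exp h - 1)))" using pos by simp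
  also have "exp (ln (1 + p * (exp h - 1))) \<le> exp (h * p + h\<^sup>2 / 8)" using aux by simp
  also have "exp (- s * L) * exp (h * p + h\<^sup>2 / 8) = exp (s * m + s\<^sup>2 * L\<^sup>2 / 2)"
    using L by (simp add: mult_exp_exp p_def h_def field_simps power2_eq_square)
  finally show ?thesis using 1 by (simp add: m_def)
qed


lemma concave_sq:
  fixes \<eta> D y :: real
  assumes eta: "\<eta> > 0" and D: "2 * \<eta> * D\<^sup>2 \<le> 1"
  shows "concave_on {y - D..y + D} (\<lambda>q. exp (- \<eta> * (y - q)\<^sup>2))"
  unfolding concave_on_def
proof (rule f''_ge0_imp_convex)
  show "convex {y - D..y + D}" by simp
  fix q assume q: "q \<in> {y - D..y + D}"
  show "((\<lambda>q. - exp (- \<eta> * (y - q)\<^sup>2)) has_real_derivative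
         (- exp (- \<eta> * (y - q)\<^sup>2) * (2 * \<eta> * (y - q)))) (at q)"
    apply (rule derivative_eq_intros refl | simp)+
    apply (simp add: algebra_simps)
    done
  show "((\<lambda>q. - exp (- \<eta> * (y - q)\<^sup>2) * (2 * \<eta> * (y - q))) has_real_derivative
         (exp (- \<eta> * (y - q)\<^sup>2) * (2 * \<eta> - 4 * \<eta>\<^sup>2 * (y - q)\<^sup>2))) (at q)"
    apply (rule derivative_eq_intros refl | simp)+
    apply (simp add: algebra_simps power2_eq_square)
    done
  have "(y - q)\<^sup>2 \<le> D\<^sup>2" using q by (intro power2_le_iff_abs_le[THEN iffD2]) auto
  then have "2 * \<eta> * (y - q)\<^sup>2 \<le> 2 * \<eta> * D\<^sup>2" using eta by simp
  then have "2 * \<eta> * (y - q)\<^sup>2 \<le> 1" using D by linarith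
  then have "2 * \<eta> * (2 * \<eta> * (y - q)\<^sup>2) \<le> 2 * \<eta> * 1" using eta by (intro mult_left_mono) auto
  then have "4 * \<eta>\<^sup>2 * (y - q)\<^sup>2 \<le> 2 * \<eta>" by (simp add: power2_eq_square algebra_simps)
  then show "0 \<le> exp (- \<eta> * (y - q)\<^sup>2) * (2 * \<eta> - 4 * \<eta>\<^sup>2 * (y - q)\<^sup>2)" by simp
qed

lemma ewa_step_split:
  assumes n: "n > 0"
  shows "(\<Sum>i<n. exp (- \<eta> * (A i + b i))) = (\<Sum>i<n. exp (- \<eta> * A i)) * (\<Sum>i<n. ewa_weight \<eta> A n i * exp (- \<eta> * b i))"
proof -
  have pos: "(\<Sum>i<n. exp (- \<eta> * A i)) > 0" using n by (intro sum_pos) auto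
  have "(\<Sum>i<n. exp (- \<eta> * A i)) * (\<Sum>i<n. ewa_weight \<eta> A n i * exp (- \<eta> * b i))
     = (\<Sum>i<n. exp (- \<eta> * A i) * exp (- \<eta> * b i))"
    unfolding ewa_weight_def sum_distrib_left using pos by (intro sum.cong refl) simp
  also have "\<dots> = (\<Sum>i<n. exp (- \<eta> * (A i + b i)))" by (simp add: algebra_simps flip: exp_add)
  finally show ?thesis by simp
qed

lemma ewa_lin:
  fixes l C :: "nat \<Rightarrow> nat \<Rightarrow> real"
  assumes n: "n > 0" and eta: "\<eta> > 0" and L: "L > 0"
   and lb: "\<forall>t\<in>{1..T}. \<forall>i<n. \<bar>l t i\<bar> \<le> L"
   and C: "\<And>m i. C m i = (\<Sum>s=1..m. l s i)"
   and i0: "i0 < n"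
  shows "(\<Sum>t=1..T. \<Sum>i<n. ewa_weight \<eta> (C (t-1)) n i * l t i) - C T i0 \<le> ln n / \<eta> + T*\<eta>*L\<^sup>2/2"
proof -
  define V where "V m = (\<Sum>i<n. exp (- \<eta> * C m i))" for m
  define S where "S m = (\<Sum>t=1..m. \<Sum>i<n. ewa_weight \<eta> (C (t-1)) n i * l t i)" for m
  have ind: "m \<le> T \<Longrightarrow> V m \<le> n * exp (- \<eta> * S m + m * \<eta>\<^sup>2 * L\<^sup>2 / 2)" for m
  proof (induction m)
    case 0
    then show ?case by (simp add: V_def S_def C)
  next
    case (Suc m)
    have IH: "V m \<le> n * exp (- \<eta> * S m + m * \<eta>\<^sup>2 * L\<^sup>2 / 2)" using Suc by simp
    have Csuc: "C (Suc m) i = C m i + l (Suc m) i" for i by (simp add: C)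
    have "V (Suc m) = V m * (\<Sum>i<n. ewa_weight \<eta> (C m) n i * exp (\<eta> * (- l (Suc m) i)))"
      unfolding V_def Csuc using ewa_step_split[OF n] by simp
    also have "(\<Sum>i<n. ewa_weight \<eta> (C m) n i * exp (\<eta> * (- l (Suc m) i)))
        \<le> exp (\<eta> * (\<Sum>i<n. ewa_weight \<eta> (C m) n i * (- l (Suc m) i)) + \<eta>\<^sup>2 * L\<^sup>2 / 2)"
      using lb Suc.prems by (intro hoeff_fin ewa_weight_nonneg ewa_weight_sum n L eta) auto
    also have "V m * exp (\<eta> * (\<Sum>i<n. ewa_weight \<eta> (C m) n i * (- l (Suc m) i)) + \<eta>\<^sup>2 * L\<^sup>2 / 2)
       \<le> n * exp (- \<eta> * S m + m * \<eta>\<^sup>2 * L\<^sup>2 / 2) * exp (\<eta> * (\<Sum>i<n. ewa_weight \<eta> (C m) n i * (- l (Suc m) i)) + \<eta>\<^sup>2 * L\<^sup>2 / 2)"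
      by (intro mult_right_mono IH) auto
    also have "\<dots> = n * exp (- \<eta> * S (Suc m) + Suc m * \<eta>\<^sup>2 * L\<^sup>2 / 2)"
      by (simp add: S_def sum_negf mult.assoc flip: exp_add) (simp add: algebra_simps)
    finally show ?case
      by (simp add: mult_left_mono V_def sum_nonneg)
  qed
  have "exp (- \<eta> * C T i0) \<le> V T"
    unfolding V_def using i0 by (intro member_le_sum) auto
  also have "\<dots> \<le> n * exp (- \<eta> * S T + T * \<eta>\<^sup>2 * L\<^sup>2 / 2)" by (rule ind) simp
  finally have "ln (exp (- \<eta> * C T i0)) \<le> ln (n * exp (- \<eta> * S T + T * \<eta>\<^sup>2 * L\<^sup>2 / 2))"
    using n by (subst ln_le_cancel_iff) auto
  then have "- \<eta> * C T i0 \<le> ln n + (- \<eta> * S T + T * \<eta>\<^sup>2 * L\<^sup>2 / 2)"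
    using n by (simp add: ln_mult)
  then have "\<eta> * (S T - C T i0) \<le> \<eta> * (ln n / \<eta> + T*\<eta>*L\<^sup>2/2)"
    using eta by (simp add: algebra_simps power2_eq_square)
  then show ?thesis using eta unfolding S_def by simp
qed



lemma ewa_sq:
  fixes p Lc :: "nat \<Rightarrow> nat \<Rightarrow> real" and y :: "nat \<Rightarrow> real"
  assumes n: "n > 0" and eta: "\<eta> > 0" and D: "2 * \<eta> * D\<^sup>2 \<le> 1"
   and bd: "\<forall>t\<in>{1..T}. \<forall>j<n. \<bar>y t - p t j\<bar> \<le> D"
   and Lc: "\<And>m j. Lc m j = (\<Sum>s=1..m. (y s - p s j)\<^sup>2)"
   and j0: "j0 < n"
  shows "(\<Sum>t=1..T. (y t - (\<Sum>j<n. ewa_weight \<eta> (Lc (t-1)) n j * p t j))\<^sup>2) \<le> Lc T j0 + ln n / \<eta>"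
proof -
  define W where "W m = (\<Sum>j<n. exp (- \<eta> * Lc m j))" for m
  define Q where "Q m = (\<Sum>t=1..m. (y t - (\<Sum>j<n. ewa_weight \<eta> (Lc (t-1)) n j * p t j))\<^sup>2)" for m
  have ind: "m \<le> T \<Longrightarrow> W m \<le> n * exp (- \<eta> * Q m)" for m
  proof (induction m)
    case 0
    then show ?case by (simp add: W_def Q_def Lc)
  next
    case (Suc m)
    have IH: "W m \<le> n * exp (- \<eta> * Q m)" using Suc by simp
    have Lsuc: "Lc (Suc m) j = Lc m j + (y (Suc m) - p (Suc m) j)\<^sup>2" for j by (simp add: Lc)
    have "W (Suc m) = W m * (\<Sum>j<n. ewa_weight \<eta> (Lc m) n j * exp (- \<eta> * (y (Suc m) - p (Suc m) j)\<^sup>2))"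
      unfolding W_def Lsuc using ewa_step_split[OF n] by simp
    also have "(\<Sum>j<n. ewa_weight \<eta> (Lc m) n j * exp (- \<eta> * (y (Suc m) - p (Suc m) j)\<^sup>2))
        \<le> exp (- \<eta> * (y (Suc m) - (\<Sum>j<n. ewa_weight \<eta> (Lc m) n j *\<^sub>R p (Suc m) j))\<^sup>2)"
    proof (rule concave_on_sum[OF _ _ concave_sq[OF eta D, of "y (Suc m)"], of "{..<n}" "ewa_weight \<eta> (Lc m) n" "p (Suc m)"])
      show "finite {..<n}" by simp
      show "{..<n} \<noteq> {}" using n by auto
      show "sum (ewa_weight \<eta> (Lc m) n) {..<n} = 1" by (rule ewa_weight_sum[OF n])
      show "\<And>i. i \<in> {..<n} \<Longrightarrow> 0 \<le> ewa_weight \<eta> (Lc m) n i" by (rule ewa_weight_nonneg)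
      fix i assume "i \<in> {..<n}"
      then have "\<bar>y (Suc m) - p (Suc m) i\<bar> \<le> D" using bd Suc.prems by auto
      then show "p (Suc m) i \<in> {y (Suc m) - D..y (Suc m) + D}" by (auto simp: abs_le_iff)
    qed
    also have "W m * exp (- \<eta> * (y (Suc m) - (\<Sum>j<n. ewa_weight \<eta> (Lc m) n j *\<^sub>R p (Suc m) j))\<^sup>2)
       \<le> n * exp (- \<eta> * Q m) * exp (- \<eta> * (y (Suc m) - (\<Sum>j<n. ewa_weight \<eta> (Lc m) n j *\<^sub>R p (Suc m) j))\<^sup>2)"
      by (intro mult_right_mono IH) auto
    also have "\<dots> = n * exp (- \<eta> * Q (Suc m))"
      by (simp add: Q_def mult.assoc flip: exp_add) (simp add: algebra_simps)
    finally show ?case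
      by (simp add: mult_left_mono W_def sum_nonneg)
  qed
  have "exp (- \<eta> * Lc T j0) \<le> W T"
    unfolding W_def using j0 by (intro member_le_sum) auto
  also have "\<dots> \<le> n * exp (- \<eta> * Q T)" by (rule ind) simp
  finally have "ln (exp (- \<eta> * Lc T j0)) \<le> ln (n * exp (- \<eta> * Q T))"
    using n by (subst ln_le_cancel_iff) auto
  then have "- \<eta> * Lc T j0 \<le> ln n + (- \<eta> * Q T)"
    using n by (simp add: ln_mult)
  then have "\<eta> * Q T \<le> \<eta> * (Lc T j0 + ln n / \<eta>)"
    using eta by (simp add: algebra_simps)
  then show ?thesis using eta unfolding Q_def by simp
qed

lemma abs_le_sup_norm:
  assumes "\<And>z. \<bar>h z\<bar> \<le> M"
  shows "\<bar>h z\<bar> \<le> sup_norm h"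
  unfolding sup_norm_def
  by (rule cSUP_upper) (use assms in \<open>auto intro!: bdd_aboveI[of _ M]\<close>)

lemma cov_exists:
  assumes "totally_bounded_sup F" "\<epsilon> > 0"
  shows "\<exists>G. finite G \<and> card G = covering_number F \<epsilon> \<and> proper_net F \<epsilon> G"
proof -
  obtain G where G: "finite G" "proper_net F \<epsilon> G" using assms unfolding totally_bounded_sup_def by blast
  show ?thesis unfolding covering_number_def
    by (rule LeastI_ex) (use G in blast)
qed

lemma cov_mono:
  assumes "totally_bounded_sup F" "\<epsilon> > 0" "\<epsilon> \<le> \<epsilon>'"
  shows "covering_number F \<epsilon>' \<le> covering_number F \<epsilon>"
proof -
  obtain G where G: "finite G" "card G = covering_number F \<epsilon>" "proper_net F \<epsilon> G"
    using cov_exists[OF assms(1,2)] by blast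
  have "proper_net F \<epsilon>' G" using G(3) assms(3) unfolding proper_net_def by force
  then have "covering_number F \<epsilon>' \<le> card G" unfolding covering_number_def
    by (intro Least_le) (use G in blast)
  then show ?thesis using G by simp
qed

lemma geom_sum: "(\<Sum>k=1..K. (1/2::real)^k) = 1 - (1/2)^K"
  by (induction K) (auto simp: field_simps)

lemma telescope: "(\<Sum>k=1..(K::nat). (h k - h (k - 1) :: real)) = h K - h 0"
  by (induction K) auto

lemma integral_lb:
  fixes c :: "nat \<Rightarrow> real" and \<phi> :: "real \<Rightarrow> real"
  assumes g: "\<gamma> > 0" and c0: "\<And>k. c k \<ge> 0"
   and cb: "\<And>k \<epsilon>. k \<in> {1..K} \<Longrightarrow> \<epsilon> \<in> {\<gamma>/2^(k+1)<..\<gamma>/2^k} \<Longrightarrow> c k \<le> \<phi> \<epsilon>"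
  shows "ennreal (\<Sum>k=1..K. \<gamma>/2^(k+1) * c k) \<le> (\<integral>\<^sup>+ \<epsilon>\<in>{0..\<gamma>/2}. ennreal (\<phi> \<epsilon>) \<partial>lborel)"
proof -
  define I where "I k = {\<gamma>/2^(k+1)<..\<gamma>/2^k}" for k :: nat
  have Ile: "\<gamma>/2^(k+1) \<le> \<gamma>/2^k" for k :: nat using g by (simp add: field_simps)
  have "ennreal (\<Sum>k=1..K. \<gamma>/2^(k+1) * c k) = (\<Sum>k=1..K. ennreal (c k) * emeasure lborel (I k))"
  proof -
    have "ennreal (\<Sum>k=1..K. \<gamma>/2^(k+1) * c k) = (\<Sum>k=1..K. ennreal (\<gamma>/2^(k+1) * c k))"
      using g c0 by (intro sum_ennreal[symmetric]) auto
    also have "\<dots> = (\<Sum>k=1..K. ennreal (c k) * emeasure lborel (I k))"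
    proof (intro sum.cong refl)
      fix k :: nat
      have "\<gamma> / 2^k - \<gamma> / 2^(k+1) = \<gamma>/2^(k+1)" by (simp add: field_simps)
      then show "ennreal (\<gamma>/2^(k+1) * c k) = ennreal (c k) * emeasure lborel (I k)"
        unfolding I_def using Ile[of k] g c0[of k] by (simp add: ennreal_mult[symmetric] mult.commute)
    qed
    finally show ?thesis .
  qed
  also have "\<dots> = (\<Sum>k=1..K. \<integral>\<^sup>+ \<epsilon>. ennreal (c k) * indicator (I k) \<epsilon> \<partial>lborel)"
    by (intro sum.cong refl nn_integral_cmult_indicator[symmetric]) (auto simp: I_def)
  also have "\<dots> = (\<integral>\<^sup>+ \<epsilon>. (\<Sum>k=1..K. ennreal (c k) * indicator (I k) \<epsilon>) \<partial>lborel)"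
    by (intro nn_integral_sum[symmetric]) (auto simp: I_def)
  also have "\<dots> \<le> (\<integral>\<^sup>+ \<epsilon>. ennreal (\<phi> \<epsilon>) * indicator {0..\<gamma>/2} \<epsilon> \<partial>lborel)"
  proof (intro nn_integral_mono)
    fix \<epsilon> :: real
    show "(\<Sum>k=1..K. ennreal (c k) * indicator (I k) \<epsilon>) \<le> ennreal (\<phi> \<epsilon>) * indicator {0..\<gamma>/2} \<epsilon>"
    proof (cases "\<exists>k\<in>{1..K}. \<epsilon> \<in> I k")
      case False
      then have "(\<Sum>k=1..K. ennreal (c k) * indicator (I k) \<epsilon>) = 0" by (intro sum.neutral) auto
      then show ?thesis by simp
    next
      case True
      then obtain k0 where k0: "k0 \<in> {1..K}" "\<epsilon> \<in> I k0" by blast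
      have other: "\<epsilon> \<notin> I k" if "k \<noteq> k0" for k
      proof
        assume e: "\<epsilon> \<in> I k"
        have key: "\<gamma> / 2^b \<le> \<gamma> / 2^(a+1)" if "a < b" for a b :: nat
        proof -
          have "(2::real)^(a+1) \<le> 2^b" using that by (intro power_increasing) auto
          then show ?thesis using g by (intro divide_left_mono) auto
        qed
        show False
        proof (cases "k < k0")
          case True
          then have "\<gamma> / 2^k0 \<le> \<gamma> / 2^(k+1)" by (rule key)
          then show False using e k0(2) unfolding I_def by auto
        next
          case False
          then have "k0 < k" using that by auto
          then have "\<gamma> / 2^k \<le> \<gamma> / 2^(k0+1)" by (rule key)
          then show False using e k0(2) unfolding I_def by auto
        qed
      qed
      have "(\<Sum>k=1..K. ennreal (c k) * indicator (I k) \<epsilon>) = ennreal (c k0) * indicator (I k0) \<epsilon>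
            + (\<Sum>k\<in>{1..K} - {k0}. ennreal (c k) * indicator (I k) \<epsilon>)"
        by (rule sum.remove) (use k0(1) in auto)
      also have "(\<Sum>k\<in>{1..K} - {k0}. ennreal (c k) * indicator (I k) \<epsilon>) = 0"
        using other by (intro sum.neutral) auto
      finally have eq: "(\<Sum>k=1..K. ennreal (c k) * indicator (I k) \<epsilon>) = ennreal (c k0)"
        using k0(2) by simp
      have mem: "\<epsilon> \<in> {0..\<gamma>/2}"
      proof -
        have "(2::real) \<le> 2^k0" using k0(1) by (cases k0) auto
        then have "\<gamma>/2^k0 \<le> \<gamma>/2" using g by (intro divide_left_mono) auto
        moreover have "0 < \<gamma>/2^(k0+1)" using g by simp
        moreover have "\<epsilon> \<le> \<gamma>/2^k0" "\<gamma>/2^(k0+1) < \<epsilon>" using k0(2) unfolding I_def by auto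
        ultimately have "\<epsilon> \<le> \<gamma>/2" "0 \<le> \<epsilon>" by linarith+
        then show ?thesis by simp
      qed
      show ?thesis unfolding eq using mem cb[OF k0(1), of \<epsilon>] k0(2) unfolding I_def
        by (auto intro: ennreal_leI)
    qed
  qed
  finally show ?thesis .
qed


lemma ewa_lin_tuned:
  fixes l C :: "nat \<Rightarrow> nat \<Rightarrow> real"
  assumes n: "n > 0" and L: "L > 0" and T: "T > 0"
   and eta: "\<eta> = sqrt (2 * ln n / T) / L"
   and lb: "\<forall>t\<in>{1..T}. \<forall>i<n. \<bar>l t i\<bar> \<le> L"
   and C: "\<And>m i. C m i = (\<Sum>s=1..m. l s i)"
   and i0: "i0 < n"
  shows "(\<Sum>t=1..T. \<Sum>i<n. ewa_weight \<eta> (C (t-1)) n i * l t i) - C T i0 \<le> L * sqrt (2 * T * ln n)"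
proof (cases "n = 1")
  case True
  have w: "ewa_weight \<eta> A (Suc 0) 0 = 1" for A using ewa_weight_sum[of 1 \<eta> A] by simp
  have "i0 = 0" using i0 True by simp
  then show ?thesis using True by (simp add: w C)
next
  case False
  then have n2: "n \<ge> 2" using n by simp
  then have lnn: "ln n > 0" by simp
  define r where "r = sqrt (2 * ln n / T)"
  have r0: "r > 0" using lnn T by (simp add: r_def)
  have r2: "r^2 = 2 * ln n / T" using lnn T by (simp add: r_def)
  have eta0: "\<eta> > 0" using eta r0 L by (simp add: r_def)
  have "(\<Sum>t=1..T. \<Sum>i<n. ewa_weight \<eta> (C (t-1)) n i * l t i) - C T i0 \<le> ln n / \<eta> + T*\<eta>*L\<^sup>2/2"
    by (rule ewa_lin[OF n eta0 L lb C i0])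
  also have "\<dots> = L * (T * r)"
  proof -
    have "ln n = r^2 * T / 2" using r2 T by (simp add: field_simps)
    then show ?thesis unfolding eta r_def[symmetric] using r0 L T by (simp add: field_simps power2_eq_square)
  qed
  also have "real T * r = sqrt (2 * real T * ln n)"
  proof -
    have "2 * real T * ln n = (real T * r)^2" using r2 T by (simp add: field_simps power2_eq_square)
    then show ?thesis using r0 T by simp
  qed
  finally show ?thesis .
qed

theorem theorem2:
  fixes F :: "('x \<Rightarrow> real) set" and B \<gamma> :: real and T :: nat
    and x :: "nat \<Rightarrow> 'x" and y :: "nat \<Rightarrow> real"
    and net :: "nat \<Rightarrow> ('x \<Rightarrow> real) set"
    and proj :: "nat \<Rightarrow> ('x \<Rightarrow> real) \<Rightarrow> ('x \<Rightarrow> real)"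
    and f0 :: "nat \<Rightarrow> 'x \<Rightarrow> real" and g :: "nat \<Rightarrow> nat \<Rightarrow> 'x \<Rightarrow> real"
  defines "Gk \<equiv> (\<lambda>k. (\<lambda>f z. proj k f z - proj (k - 1) f z) ` F)"
  defines "K \<equiv> nat \<lceil>log 2 (\<gamma> * real T / B)\<rceil>"
  defines "N0 \<equiv> card (net 0)"
  defines "N \<equiv> (\<lambda>k. card (Gk k))"
  defines "\<eta>0 \<equiv> 1 / (50 * B\<^sup>2)"
  defines "\<eta> \<equiv> (\<lambda>k. sqrt (2 * ln (real (N k)) / real T) * 2 ^ k / (30 * B * \<gamma>))"
  assumes B_pos: "B > 0" and T_ge: "T \<ge> 1"
    and gamma_low: "B / real T < \<gamma>" and gamma_up: "\<gamma> < B"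
    and F_ne: "F \<noteq> {}"
    and F_bdd: "\<forall>f\<in>F. \<forall>z. \<bar>f z\<bar> \<le> B"
    and F_tb: "totally_bounded_sup F"
    and y_bdd: "\<forall>t\<in>{1..T}. \<bar>y t\<bar> \<le> B"
    and nets: "\<forall>k. proper_net F (\<gamma> / 2 ^ k) (net k) \<and> finite (net k)
                 \<and> card (net k) = covering_number F (\<gamma> / 2 ^ k)"
    and proj: "\<forall>k. \<forall>f\<in>F. proj k f \<in> net k
                 \<and> (\<forall>h\<in>net k. sup_norm (\<lambda>z. f z - proj k f z) \<le> sup_norm (\<lambda>z. f z - h z))"
    and enum0: "bij_betw f0 {..<N0} (net 0)"
    and enumk: "\<forall>k\<ge>1. bij_betw (g k) {..<N k} (Gk k)"
  shows "ennreal ((\<Sum>t=1..T. (y t - chain_pred \<eta>0 K N0 N \<eta> g f0 x y t)\<^sup>2)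
                   - (INF f\<in>F. \<Sum>t=1..T. (y t - f (x t))\<^sup>2))
         \<le> ennreal (B\<^sup>2 * (5 + 50 * ln (real (covering_number F \<gamma>))))
           + ennreal (120 * B * sqrt (real T))
             * (\<integral>\<^sup>+ \<epsilon>\<in>{0..\<gamma>/2}. ennreal (sqrt (ln (real (covering_number F \<epsilon>)))) \<partial>lborel)"
proof -
  let ?cum = "chain_cum K N \<eta> g f0 x y"
  let ?loss = "chain_loss K N \<eta> g f0 x y"
  define p where "p t j = chain_fhat K N \<eta> g f0 (?cum (t-1)) j (x t)" for t j
  define M where "M k = card (net k)" for k
  have T0: "real T > 0" using T_ge by simp
  have g0: "\<gamma> > 0" using gamma_low B_pos T0 by (smt (verit) divide_pos_pos)
  have netF: "net k \<subseteq> F" for k using nets unfolding proper_net_def by blast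
  have netfin: "finite (net k)" for k using nets by blast
  have Mcov: "M k = covering_number F (\<gamma>/2^k)" for k using nets unfolding M_def by blast
  have Fb: "\<bar>f z\<bar> \<le> B" if "f \<in> F" for f z using F_bdd that by blast
  have projF: "proj k f \<in> net k" if "f \<in> F" for k f using proj that by blast
  have proj_approx: "\<bar>f z - proj k f z\<bar> \<le> \<gamma>/2^k" if f: "f \<in> F" for k f z
  proof -
    obtain h where h: "h \<in> net k" "sup_norm (\<lambda>z. f z - h z) \<le> \<gamma>/2^k"
      using nets f unfolding proper_net_def by blast
    have pF: "proj k f \<in> F" using projF[OF f] netF by blast
    have "\<bar>f z - proj k f z\<bar> \<le> sup_norm (\<lambda>z. f z - proj k f z)"
    proof (rule abs_le_sup_norm[where M="2*B"])
      fix z show "\<bar>f z - proj k f z\<bar> \<le> 2 * B" using Fb[OF f, of z] Fb[OF pF, of z] by linarith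
    qed
    also have "\<dots> \<le> sup_norm (\<lambda>z. f z - h z)" using proj f h(1) by blast
    finally show ?thesis using h(2) by linarith
  qed
  have gb: "\<bar>g k i z\<bar> \<le> 3*\<gamma>/2^k" if k: "1 \<le> k" and i: "i < N k" for k i z
  proof -
    have "g k i \<in> Gk k" using enumk k i bij_betw_apply unfolding N_def by fastforce
    then obtain f where f: "f \<in> F" "g k i = (\<lambda>z. proj k f z - proj (k-1) f z)" unfolding Gk_def by auto
    have "\<bar>g k i z\<bar> \<le> \<bar>f z - proj k f z\<bar> + \<bar>f z - proj (k-1) f z\<bar>" using f(2) by simp
    also have "\<dots> \<le> \<gamma>/2^k + \<gamma>/2^(k-1)" using proj_approx[OF f(1)] by (intro add_mono)
    also have "\<gamma>/2^(k-1) = 2*\<gamma>/2^k" using k by (cases k) auto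
    finally show ?thesis by simp
  qed
  have f0b: "\<bar>f0 j z\<bar> \<le> B" if "j < N0" for j z
  proof -
    have "f0 j \<in> net 0" using enum0 that bij_betw_apply by fastforce
    then show ?thesis using Fb netF by blast
  qed
  obtain f1 where f1: "f1 \<in> F" using F_ne by blast
  have Gsub: "Gk k \<subseteq> (\<lambda>(a,b). \<lambda>z. a z - b z) ` (net k \<times> net (k-1))" for k
    unfolding Gk_def using projF by fastforce
  have Gfin: "finite (Gk k)" for k by (rule finite_subset[OF Gsub]) (auto intro: netfin)
  have NMM: "N k \<le> M k * M (k-1)" for k
  proof -
    have "N k \<le> card ((\<lambda>(a,b). \<lambda>z. a z - b z) ` (net k \<times> net (k-1)))"
      unfolding N_def by (rule card_mono[OF _ Gsub]) (auto intro: netfin)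
    also have "\<dots> \<le> card (net k \<times> net (k-1))" by (rule card_image_le) (auto intro: netfin)
    finally show ?thesis by (simp add: M_def card_cartesian_product)
  qed
  have Npos: "0 < N k" for k
  proof -
    have "(\<lambda>z. proj k f1 z - proj (k - 1) f1 z) \<in> Gk k" unfolding Gk_def using f1 by blast
    then show ?thesis unfolding N_def using Gfin card_gt_0_iff by blast
  qed
  have Mpos: "0 < M k" for k
    unfolding M_def using projF[OF f1, of k] netfin card_gt_0_iff by blast
  have N0pos: "0 < N0" using Mpos[of 0] unfolding M_def N0_def .
  have Mmono: "M (k-1) \<le> M k" for k
  proof -
    have "(\<gamma>::real)/2^k \<le> \<gamma>/2^(k-1)" using g0 by (intro divide_left_mono power_increasing) auto
    then show ?thesis unfolding Mcov using cov_mono[OF F_tb] g0 by simp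
  qed
  have NM: "real (N k) \<le> (real (M k))^2" for k
  proof -
    have "N k \<le> M k * M k" using NMM[of k] Mmono[of k] by (meson le_trans mult_le_mono2)
    then show ?thesis by (simp add: power2_eq_square flip: of_nat_mult)
  qed
  have geo: "(\<Sum>k=1..K. 3*\<gamma>/2^k) \<le> 3*\<gamma>"
  proof -
    have "(\<Sum>k=1..K. 3*\<gamma>/2^k) = 3*\<gamma> * (\<Sum>k=1..K. (1/2::real)^k)"
      by (simp add: sum_distrib_left power_one_over)
    also have "\<dots> = 3*\<gamma> * (1 - (1/2)^K)" by (simp only: geom_sum)
    also have "\<dots> \<le> 3*\<gamma>" using g0 by simp
    finally show ?thesis .
  qed
  have pexp: "p t j = f0 j (x t) + (\<Sum>k=1..K. \<Sum>i<N k. ewa_weight (\<eta> k) (?cum (t-1) j k) (N k) i * g k i (x t))" for t j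
    unfolding p_def chain_fhat_def by simp
  have pdev: "\<bar>p t j - f0 j (x t)\<bar> \<le> 3*\<gamma>" for t j
  proof -
    have "\<bar>p t j - f0 j (x t)\<bar> = \<bar>\<Sum>k=1..K. \<Sum>i<N k. ewa_weight (\<eta> k) (?cum (t-1) j k) (N k) i * g k i (x t)\<bar>"
      by (simp add: pexp)
    also have "\<dots> \<le> (\<Sum>k=1..K. \<bar>\<Sum>i<N k. ewa_weight (\<eta> k) (?cum (t-1) j k) (N k) i * g k i (x t)\<bar>)"
      by (rule sum_abs)
    also have "\<dots> \<le> (\<Sum>k=1..K. 3*\<gamma>/2^k)"
    proof (rule sum_mono)
      fix k assume k: "k \<in> {1..K}"
      have "\<bar>\<Sum>i<N k. ewa_weight (\<eta> k) (?cum (t-1) j k) (N k) i * g k i (x t)\<bar>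
          \<le> (\<Sum>i<N k. \<bar>ewa_weight (\<eta> k) (?cum (t-1) j k) (N k) i * g k i (x t)\<bar>)" by (rule sum_abs)
      also have "\<dots> \<le> (\<Sum>i<N k. ewa_weight (\<eta> k) (?cum (t-1) j k) (N k) i * (3*\<gamma>/2^k))"
      proof (rule sum_mono)
        fix i assume i: "i \<in> {..<N k}"
        have "\<bar>g k i (x t)\<bar> \<le> 3*\<gamma>/2^k" using gb k i by auto
        then show "\<bar>ewa_weight (\<eta> k) (?cum (t-1) j k) (N k) i * g k i (x t)\<bar> \<le> ewa_weight (\<eta> k) (?cum (t-1) j k) (N k) i * (3*\<gamma>/2^k)"
          using ewa_weight_nonneg by (simp add: abs_mult mult_left_mono del: times_divide_eq_right)
      qed
      also have "\<dots> = (\<Sum>i<N k. ewa_weight (\<eta> k) (?cum (t-1) j k) (N k) i) * (3*\<gamma>/2^k)"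
        by (rule sum_distrib_right[symmetric])
      also have "\<dots> = 3*\<gamma>/2^k" by (simp only: ewa_weight_sum[OF Npos] mult_1)
      finally show "\<bar>\<Sum>i<N k. ewa_weight (\<eta> k) (?cum (t-1) j k) (N k) i * g k i (x t)\<bar> \<le> 3*\<gamma>/2^k" .
    qed
    also have "\<dots> \<le> 3*\<gamma>" by (rule geo)
    finally show ?thesis .
  qed
  have ybd: "\<bar>y t - p t j\<bar> \<le> 5*B" if "t \<in> {1..T}" "j < N0" for t j
    using y_bdd that f0b[OF that(2), of "x t"] pdev[of t j] gamma_up by fastforce
  have loss_eq: "?loss m j = (\<Sum>s=1..m. (y s - p s j)\<^sup>2)" for m j
    by (induction m) (simp_all add: p_def)
  have cum_eq: "?cum m j k i = (\<Sum>s=1..m. -2 * (y s - p s j) * g k i (x s))" for m j k i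
    by (induction m) (simp_all add: p_def)
  have pred_eq: "chain_pred \<eta>0 K N0 N \<eta> g f0 x y t = (\<Sum>j<N0. ewa_weight \<eta>0 (?loss (t-1)) N0 j * p t j)" for t
    unfolding chain_pred_def p_def by simp
  have eta0: "\<eta>0 > 0" using B_pos by (simp add: \<eta>0_def)
  have D0: "2 * \<eta>0 * (5*B)\<^sup>2 \<le> 1" using B_pos by (simp add: \<eta>0_def power2_eq_square)
  have step1: "(\<Sum>t=1..T. (y t - chain_pred \<eta>0 K N0 N \<eta> g f0 x y t)\<^sup>2) \<le> ?loss T j0 + 50*B\<^sup>2 * ln N0"
    if j0: "j0 < N0" for j0
  proof -
    have "(\<Sum>t=1..T. (y t - chain_pred \<eta>0 K N0 N \<eta> g f0 x y t)\<^sup>2)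
        = (\<Sum>t=1..T. (y t - (\<Sum>j<N0. ewa_weight \<eta>0 (?loss (t-1)) N0 j * p t j))\<^sup>2)"
      by (simp add: pred_eq)
    also have "\<dots> \<le> ?loss T j0 + ln N0 / \<eta>0"
      by (rule ewa_sq[OF N0pos eta0 D0 _ loss_eq j0]) (use ybd in blast)
    also have "ln N0 / \<eta>0 = 50*B\<^sup>2 * ln N0" by (simp add: \<eta>0_def)
    finally show ?thesis .
  qed
  have Kb: "\<gamma> / 2^K \<le> B / T"
  proof -
    define r where "r = \<gamma> * real T / B"
    have r1: "r > 1" using gamma_low B_pos T0 by (simp add: r_def field_simps)
    have "log 2 r \<le> real K" unfolding K_def r_def[symmetric] by linarith
    then have "2 powr (log 2 r) \<le> 2 powr (real K)" by simp
    then have "r \<le> 2^K" using r1 by (simp add: powr_realpow)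
    then show ?thesis using B_pos T0 g0 by (simp add: r_def field_simps)
  qed
  define Isum where "Isum = (\<Sum>k=1..K. \<gamma>/2^(k+1) * sqrt (ln (real (M k))))"
  define A where "A = B\<^sup>2 * (5 + 50 * ln (real (covering_number F \<gamma>)))"
  have N0M: "N0 = covering_number F \<gamma>" using Mcov[of 0] unfolding M_def N0_def by simp
  have main: "(\<Sum>t=1..T. (y t - chain_pred \<eta>0 K N0 N \<eta> g f0 x y t)\<^sup>2) - (A + 120 * B * sqrt (real T) * Isum)
               \<le> (\<Sum>t=1..T. (y t - f (x t))\<^sup>2)" if f: "f \<in> F" for f
  proof -
    have "proj 0 f \<in> f0 ` {..<N0}" using projF[OF f] enum0 by (simp add: bij_betw_def)
    then obtain j0 where j0: "j0 < N0" "f0 j0 = proj 0 f" by auto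
    have "\<forall>k. \<exists>i. 1 \<le> k \<longrightarrow> i < N k \<and> g k i = (\<lambda>z. proj k f z - proj (k-1) f z)"
    proof (intro allI)
      fix k
      show "\<exists>i. 1 \<le> k \<longrightarrow> i < N k \<and> g k i = (\<lambda>z. proj k f z - proj (k-1) f z)"
      proof (cases "1 \<le> k")
        case True
        have "(\<lambda>z. proj k f z - proj (k-1) f z) \<in> Gk k" unfolding Gk_def using f by blast
        then have "(\<lambda>z. proj k f z - proj (k-1) f z) \<in> g k ` {..<N k}" using enumk True by (simp add: bij_betw_def)
        then show ?thesis by auto
      qed simp
    qed
    then obtain ik where ik: "\<And>k. 1 \<le> k \<Longrightarrow> ik k < N k \<and> g k (ik k) = (\<lambda>z. proj k f z - proj (k-1) f z)"
      by metis
    define u where "u t k i = ewa_weight (\<eta> k) (?cum (t-1) j0 k) (N k) i" for t k i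
    define l where "l t k i = -2 * (y t - p t j0) * g k i (x t)" for t k i
    have round: "(y t - p t j0)\<^sup>2 - (y t - proj K f (x t))\<^sup>2 \<le> (\<Sum>k=1..K. (\<Sum>i<N k. u t k i * l t k i) - l t k (ik k))" for t
    proof -
      have "(\<Sum>k=1..K. g k (ik k) (x t)) = (\<Sum>k=1..K. proj k f (x t) - proj (k-1) f (x t))"
        using ik by (intro sum.cong refl) auto
      also have "\<dots> = proj K f (x t) - proj 0 f (x t)" by (rule telescope)
      finally have tele: "proj K f (x t) = f0 j0 (x t) + (\<Sum>k=1..K. g k (ik k) (x t))" using j0 by simp
      have diff: "p t j0 - proj K f (x t) = (\<Sum>k=1..K. (\<Sum>i<N k. u t k i * g k i (x t)) - g k (ik k) (x t))"
        unfolding tele pexp u_def by (simp add: sum_subtractf)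
      have "(y t - p t j0)\<^sup>2 - (y t - proj K f (x t))\<^sup>2
          = -2*(y t - p t j0)*(p t j0 - proj K f (x t)) - (p t j0 - proj K f (x t))\<^sup>2"
        by (simp add: power2_eq_square algebra_simps)
      also have "\<dots> \<le> -2*(y t - p t j0)*(p t j0 - proj K f (x t))" by simp
      also have "\<dots> = (\<Sum>k=1..K. (\<Sum>i<N k. u t k i * l t k i) - l t k (ik k))"
        unfolding diff sum_distrib_left
        by (intro sum.cong refl) (simp add: l_def right_diff_distrib sum_distrib_left ac_simps)
      finally show ?thesis .
    qed
    have regk: "(\<Sum>t=1..T. (\<Sum>i<N k. u t k i * l t k i) - l t k (ik k)) \<le> 120*B * sqrt (real T) * (\<gamma>/2^(k+1) * sqrt (ln (real (M k))))"
      if k: "k \<in> {1..K}" for k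
    proof -
      define Lk where "Lk = 30*B*\<gamma>/2^k"
      have Lk0: "Lk > 0" using B_pos g0 by (simp add: Lk_def)
      have lb: "\<forall>t\<in>{1..T}. \<forall>i<N k. \<bar>l t k i\<bar> \<le> Lk"
      proof (intro ballI allI impI)
        fix t i assume t: "t \<in> {1..T}" and i: "i < N k"
        have "\<bar>l t k i\<bar> = 2 * \<bar>y t - p t j0\<bar> * \<bar>g k i (x t)\<bar>" unfolding l_def abs_mult by simp
        also have "\<dots> \<le> 2 * (5*B) * (3*\<gamma>/2^k)"
          using ybd[OF t j0(1)] gb[of k i "x t"] k i by (intro mult_mono) auto
        finally show "\<bar>l t k i\<bar> \<le> Lk" by (simp add: Lk_def)
      qed
      have eta_k: "\<eta> k = sqrt (2 * ln (real (N k)) / T) / Lk" by (simp add: \<eta>_def Lk_def)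
      have "(\<Sum>t=1..T. (\<Sum>i<N k. u t k i * l t k i) - l t k (ik k))
          = (\<Sum>t=1..T. \<Sum>i<N k. ewa_weight (\<eta> k) ((\<lambda>m i. ?cum m j0 k i) (t-1)) (N k) i * (\<lambda>t i. l t k i) t i)
             - (\<lambda>m i. ?cum m j0 k i) T (ik k)"
        by (simp add: sum_subtractf u_def cum_eq[of T j0 k "ik k"] l_def)
      also have "\<dots> \<le> Lk * sqrt (2 * real T * ln (real (N k)))"
        by (rule ewa_lin_tuned[OF Npos Lk0 _ eta_k lb]) (use T_ge ik k in \<open>auto simp: cum_eq l_def\<close>)
      also have "\<dots> \<le> 120*B * sqrt (real T) * (\<gamma>/2^(k+1) * sqrt (ln (real (M k))))"
      proof -
        have "ln (real (N k)) \<le> ln ((real (M k))^2)" using NM[of k] Npos[of k] Mpos[of k] by (intro ln_le_cancel_iff[THEN iffD2]) auto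
        also have "\<dots> = 2 * ln (real (M k))" using Mpos[of k] by (simp add: ln_realpow)
        finally have "ln (real (N k)) \<le> 2 * ln (real (M k))" .
        then have "2 * real T * ln (real (N k)) \<le> 2 * real T * (2 * ln (real (M k)))"
          using T0 by (intro mult_left_mono) auto
        then have "2 * real T * ln (real (N k)) \<le> 4 * real T * ln (real (M k))" by simp
        then have "sqrt (2 * real T * ln (real (N k))) \<le> sqrt (4 * real T * ln (real (M k)))" by simp
        also have "sqrt (4 * real T * ln (real (M k))) = 2 * sqrt (real T) * sqrt (ln (real (M k)))"
          by (simp add: real_sqrt_mult)
        finally have "Lk * sqrt (2 * real T * ln (real (N k))) \<le> Lk * (2 * sqrt (real T) * sqrt (ln (real (M k))))"
          using Lk0 by (simp add: mult_left_mono)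
        also have "\<dots> = 120*B * sqrt (real T) * (\<gamma>/2^(k+1) * sqrt (ln (real (M k))))"
          by (simp add: Lk_def field_simps)
        finally show ?thesis .
      qed
      finally show ?thesis .
    qed
    have approx: "(\<Sum>t=1..T. (y t - proj K f (x t))\<^sup>2) \<le> (\<Sum>t=1..T. (y t - f (x t))\<^sup>2) + 4*B\<^sup>2"
    proof -
      have "(\<Sum>t=1..T. (y t - proj K f (x t))\<^sup>2) \<le> (\<Sum>t=1..T. (y t - f (x t))\<^sup>2 + 4*B\<^sup>2/T)"
      proof (rule sum_mono)
        fix t assume t: "t \<in> {1..T}"
        have pF: "proj K f \<in> F" using projF[OF f] netF by blast
        have "(y t - proj K f (x t))\<^sup>2 - (y t - f (x t))\<^sup>2
             = (f (x t) - proj K f (x t)) * (2 * y t - f (x t) - proj K f (x t))"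
          by (simp add: power2_eq_square algebra_simps)
        also have "\<dots> \<le> \<bar>f (x t) - proj K f (x t)\<bar> * \<bar>2 * y t - f (x t) - proj K f (x t)\<bar>"
          by (metis abs_ge_self abs_mult)
        also have "\<dots> \<le> (B / T) * (4 * B)"
        proof (rule mult_mono)
          show "\<bar>f (x t) - proj K f (x t)\<bar> \<le> B / T" using proj_approx[OF f, of "x t" K] Kb by linarith
          show "\<bar>2 * y t - f (x t) - proj K f (x t)\<bar> \<le> 4 * B"
            using y_bdd t Fb[OF f, of "x t"] Fb[OF pF, of "x t"] by fastforce
        qed (use B_pos T0 in auto)
        finally show "(y t - proj K f (x t))\<^sup>2 \<le> (y t - f (x t))\<^sup>2 + 4*B\<^sup>2/T"
          by (simp add: power2_eq_square field_simps)
      qed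
      also have "\<dots> = (\<Sum>t=1..T. (y t - f (x t))\<^sup>2) + 4*B\<^sup>2" using T0 by (simp add: sum.distrib)
      finally show ?thesis .
    qed
    have "(\<Sum>t=1..T. (y t - chain_pred \<eta>0 K N0 N \<eta> g f0 x y t)\<^sup>2) \<le> ?loss T j0 + 50*B\<^sup>2 * ln (real N0)"
      by (rule step1[OF j0(1)])
    also have "?loss T j0 = (\<Sum>t=1..T. (y t - p t j0)\<^sup>2)" by (rule loss_eq)
    also have "\<dots> \<le> (\<Sum>t=1..T. (y t - proj K f (x t))\<^sup>2 + (\<Sum>k=1..K. (\<Sum>i<N k. u t k i * l t k i) - l t k (ik k)))"
      using round by (intro sum_mono) (smt (verit))
    also have "\<dots> = (\<Sum>t=1..T. (y t - proj K f (x t))\<^sup>2) + (\<Sum>k=1..K. \<Sum>t=1..T. (\<Sum>i<N k. u t k i * l t k i) - l t k (ik k))"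
      by (simp only: sum.distrib sum.swap[of _ "{1..T}" "{1..K}"])
    also have "(\<Sum>k=1..K. \<Sum>t=1..T. (\<Sum>i<N k. u t k i * l t k i) - l t k (ik k)) \<le> (\<Sum>k=1..K. 120*B * sqrt (real T) * (\<gamma>/2^(k+1) * sqrt (ln (real (M k)))))"
      by (intro sum_mono regk)
    also have "\<dots> = 120*B * sqrt (real T) * Isum" by (simp add: Isum_def sum_distrib_left)
    finally show ?thesis using approx N0M zero_le_power2[of B] by (simp add: A_def algebra_simps, linarith)
  qed
  have INF: "(\<Sum>t=1..T. (y t - chain_pred \<eta>0 K N0 N \<eta> g f0 x y t)\<^sup>2) - (A + 120 * B * sqrt (real T) * Isum)
      \<le> (INF f\<in>F. \<Sum>t=1..T. (y t - f (x t))\<^sup>2)"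
    by (rule cINF_greatest[OF F_ne main])
  then have R: "(\<Sum>t=1..T. (y t - chain_pred \<eta>0 K N0 N \<eta> g f0 x y t)\<^sup>2) - (INF f\<in>F. \<Sum>t=1..T. (y t - f (x t))\<^sup>2)
      \<le> A + 120 * B * sqrt (real T) * Isum" by linarith
  have A0: "A \<ge> 0"
  proof -
    have "ln (real (covering_number F \<gamma>)) \<ge> 0" using N0pos N0M by simp
    then show ?thesis unfolding A_def by simp
  qed
  have Isum0: "Isum \<ge> 0" unfolding Isum_def using Mpos g0 by (intro sum_nonneg mult_nonneg_nonneg) (auto simp: Suc_le_eq)
  have Ilb: "ennreal Isum \<le> (\<integral>\<^sup>+ \<epsilon>\<in>{0..\<gamma>/2}. ennreal (sqrt (ln (real (covering_number F \<epsilon>)))) \<partial>lborel)"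
    unfolding Isum_def
  proof (rule integral_lb[OF g0])
    fix k show "0 \<le> sqrt (ln (real (M k)))" using Mpos[of k] by simp
  next
    fix k \<epsilon> assume k: "k \<in> {1..K}" and e: "\<epsilon> \<in> {\<gamma>/2^(k+1)<..\<gamma>/2^k}"
    have e0: "\<epsilon> > 0" using e g0 by (smt (verit) divide_pos_pos greaterThanAtMost_iff zero_less_power)
    have "M k \<le> covering_number F \<epsilon>" unfolding Mcov using cov_mono[OF F_tb e0] e by simp
    then have "ln (real (M k)) \<le> ln (real (covering_number F \<epsilon>))" using Mpos[of k] by simp
    then show "sqrt (ln (real (M k))) \<le> sqrt (ln (real (covering_number F \<epsilon>)))" by simp
  qed
  have "ennreal ((\<Sum>t=1..T. (y t - chain_pred \<eta>0 K N0 N \<eta> g f0 x y t)\<^sup>2) - (INF f\<in>F. \<Sum>t=1..T. (y t - f (x t))\<^sup>2))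
      \<le> ennreal (A + 120 * B * sqrt (real T) * Isum)" using R by (rule ennreal_leI)
  also have "\<dots> = ennreal A + ennreal (120 * B * sqrt (real T)) * ennreal Isum"
    using A0 Isum0 B_pos by (simp add: ennreal_plus ennreal_mult)
  also have "\<dots> \<le> ennreal A + ennreal (120 * B * sqrt (real T))
      * (\<integral>\<^sup>+ \<epsilon>\<in>{0..\<gamma>/2}. ennreal (sqrt (ln (real (covering_number F \<epsilon>)))) \<partial>lborel)"
    using Ilb by (intro add_left_mono mult_left_mono) auto
  finally show ?thesis unfolding A_def .
qed
end
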